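(* For every $n\geq 4$ there exist a convex $n$-gon $Q$ (with vertices $p_1,\dots,p_n$ in cyclic order, $p_i$ labeled $i$) and vectors $x_d\in X_Q$ for every $d\in\mathrm{Diag}_n$ such that $\langle f_d^\perp, x_{d'}\rangle>0$ whenever $d\rhd d'$.
   Context: Let $Q$ be a convex $n$-gon in $\mathbb{R}^2$ with vertices $p_1,\dots,p_n$ in cyclic order; identify $p_i$ with label $i$, so triangulations of $Q$ (using only vertices of $Q$) are identified with elements of $\mathcal{T}_n$ (each triangulation identified with its set of diagonals) and diagonals with elements of $\mathrm{Diag}_n=\{\{i,j\}\subseteq[n]: i-j\not\equiv\pm1 \pmod n\}$. Two diagonals cross if they meet in the interior of $Q$. Let $X_Q$ be the space of formal combinations $\sum_{p\in V(Q)} c_p\cdot p$ with $\sum_p c_p=0$ and $\sum_p c_p p=0$ in $\mathbb{R}^2$; let $X_Q^*$ be the space of functions $V(Q)\to\mathbb{R}$ modulo restrictions of affine functions $\mathbb{R}^2\to\mathbb{R}$, with pairing $\langle[\psi],\sum_p c_p\cdot p\rangle=\sum_p c_p\psi(p)$. For a triangulation $T$ let $v_T=(\operatorname{area}(Q_{T,p}))_{p\in V(Q)}$ where $Q_{T,p}$ is the union of the triangles of $T$ having $p$ as a vertex. The secondary polytope $\Sigma_Q$ is the convex hull of the $v_T$, translated to lie in $X_Q$. It is known (Gelfand–Kapranov–Zelevinsky) that $\Sigma_Q$ is a full-dimensional polytope in the $(n-3)$-dimensional space $X_Q$ realizing the associahedron: its vertices are exactly the points $v_T$, $T\in\mathcal{T}_n$;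 its facets are $f_d$, $d\in\mathrm{Diag}_n$, where $f_d$ contains $v_T$ iff $d\in T$; and an outward normal of $f_d$ is $f_d^\perp=[\psi_d]$, where $\psi_d=\min(\ell_d,0)$ restricted to $V(Q)$ and $\ell_d$ is any nonzero affine function vanishing at both endpoints of $d$. Two facets $f_d,f_{d'}$ share a vertex iff $d,d'$ do not cross. Swapping relation: for $\{i,j\},\{i',j'\}\in\mathrm{Diag}_n$ written with $i<j$ and $i'<j'$, write $\{i,j\}\rhd\{i',j'\}$ if either $\{i,j\}$ and $\{i',j'\}$ do not cross (in particular $d\rhd d$ for every $d$), or $i'<i<j'<j<n$ and $j'-i>1$. *)

theory Defs
  imports Main "HOL.Real"
begin

definition orient :: "real \<times> real \<Rightarrow> real \<times> real \<Rightarrow> real \<times> real \<Rightarrow> real" where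
  "orient a b c = (fst b - fst a) * (snd c - snd a) - (snd b - snd a) * (fst c - fst a)"

text \<open>p 1, ..., p n are the vertices of a convex n-gon in cyclic order
  (counterclockwise or clockwise): every index-ordered triple has the same strict orientation.\<close>
definition convex_ngon :: "nat \<Rightarrow> (nat \<Rightarrow> real \<times> real) \<Rightarrow> bool" where
  "convex_ngon n p \<longleftrightarrow>
     (\<forall>i j k. 1 \<le> i \<longrightarrow> i < j \<longrightarrow> j < k \<longrightarrow> k \<le> n \<longrightarrow> orient (p i) (p j) (p k) > 0) \<or>
     (\<forall>i j k. 1 \<le> i \<longrightarrow> i < j \<longrightarrow> j < k \<longrightarrow> k \<le> n \<longrightarrow> orient (p i) (p j) (p k) < 0)"

definition is_diag :: "nat \<Rightarrow> nat \<Rightarrow> nat \<Rightarrow> bool" where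
  "is_diag n i j \<longleftrightarrow> 1 \<le> i \<and> i < j \<and> j \<le> n \<and>
     i mod n \<noteq> j mod n \<and> (i + 1) mod n \<noteq> j mod n \<and> (j + 1) mod n \<noteq> i mod n"

text \<open>Diagonals {i,j}, {i',j'} (i<j, i'<j') of a convex polygon cross iff their endpoints
  strictly interleave.\<close>
definition crosses :: "nat \<Rightarrow> nat \<Rightarrow> nat \<Rightarrow> nat \<Rightarrow> bool" where
  "crosses i j i' j' \<longleftrightarrow> (i < i' \<and> i' < j \<and> j < j') \<or> (i' < i \<and> i < j' \<and> j' < j)"

definition swaps :: "nat \<Rightarrow> nat \<Rightarrow> nat \<Rightarrow> nat \<Rightarrow> nat \<Rightarrow> bool" where
  "swaps n i j i' j' \<longleftrightarrow> \<not> crosses i j i' j' \<or>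
     (i' < i \<and> i < j' \<and> j' < j \<and> j < n \<and> j' - i > 1)"

text \<open>Membership of a formal combination \<Sum> c_k p_k in X_Q.\<close>
definition in_XQ :: "nat \<Rightarrow> (nat \<Rightarrow> real \<times> real) \<Rightarrow> (nat \<Rightarrow> real) \<Rightarrow> bool" where
  "in_XQ n p c \<longleftrightarrow> (\<Sum>k=1..n. c k) = 0 \<and> (\<Sum>k=1..n. c k * fst (p k)) = 0
      \<and> (\<Sum>k=1..n. c k * snd (p k)) = 0"

text \<open>psi_d = min(l_d, 0) on the vertices, with the nonzero affine function
  l_d(x) = orient (p i) (p j) x vanishing at both endpoints of d = {i,j}.\<close>
definition psi :: "(nat \<Rightarrow> real \<times> real) \<Rightarrow> nat \<Rightarrow> nat \<Rightarrow> nat \<Rightarrow> real" where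
  "psi p i j k = min (orient (p i) (p j) (p k)) 0"

text \<open>The pairing < f_d^perp, \<Sum> c_k p_k > = \<Sum> c_k psi_d(p_k).\<close>
definition pairing :: "nat \<Rightarrow> (nat \<Rightarrow> real \<times> real) \<Rightarrow> nat \<Rightarrow> nat \<Rightarrow> (nat \<Rightarrow> real) \<Rightarrow> real" where
  "pairing n p i j c = (\<Sum>k=1..n. c k * psi p i j k)"

end

theory Submission
  imports Defs
begin


definition tt :: "nat \<Rightarrow> real" where "tt k = - ((1/2)^k)"

definition pp :: "nat \<Rightarrow> nat \<Rightarrow> real \<times> real" where
  "pp n k = (if k = n then (0, 1) else (tt k, (tt k)^2))"

lemma tt_mono: "k < l \<Longrightarrow> tt k < tt l"
  unfolding tt_def by (simp add: power_strict_decreasing)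

lemma tt_mono_le: "k \<le> l \<Longrightarrow> tt k \<le> tt l"
  using tt_mono[of k l] by (cases "k = l") auto

lemma tt_neg: "tt k < 0" unfolding tt_def by simp

lemma tt_ge: "1 \<le> k \<Longrightarrow> - (1/2) \<le> tt k"
  using tt_mono_le[of 1 k] by (simp add: tt_def)

lemma orient_par: "orient (x, x^2) (y, y^2) (z, z^2) = (y - x) * (z - x) * (z - y)"
  unfolding orient_def by (simp add: algebra_simps power2_eq_square)

lemma orient_parN: "orient (x, x^2) (y, y^2) (0, 1) = (y - x) * (1 + x * y)"
  unfolding orient_def by (simp add: algebra_simps power2_eq_square)

lemma orient_cyc: "orient a b c = orient b c a"
  unfolding orient_def by (simp add: algebra_simps)

lemma orient_swap: "orient a c b = - orient a b c"
  unfolding orient_def by (simp add: algebra_simps)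

lemma orient_same1: "orient a b a = 0" unfolding orient_def by (simp add: algebra_simps)
lemma orient_same2: "orient a b b = 0" unfolding orient_def by (simp add: algebra_simps)

lemma pp_nN: "k \<noteq> n \<Longrightarrow> pp n k = (tt k, (tt k)^2)" by (simp add: pp_def)
lemma pp_N: "pp n n = (0, 1)" by (simp add: pp_def)

lemma conv3:
  assumes "1 \<le> a" "a < b" "b < c" "c \<le> n"
  shows "orient (pp n a) (pp n b) (pp n c) > 0"
proof (cases "c = n")
  case True
  have hab: "tt a < tt b" using assms tt_mono by auto
  have "tt a < 0" "tt b < 0" using tt_neg by auto
  then have "tt a * tt b > 0" by (rule mult_neg_neg)
  then have "1 + tt a * tt b > 0" by linarith
  then show ?thesis using True assms hab
    by (simp add: pp_nN pp_N orient_parN)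
next
  case False
  then have "a \<noteq> n" "b \<noteq> n" using assms by auto
  moreover have "tt a < tt b" "tt b < tt c" "tt a < tt c" using assms tt_mono by auto
  ultimately show ?thesis using False
    by (simp add: pp_nN orient_par)
qed




lemma diag_char:
  assumes n4: "4 \<le> n"
  shows "is_diag n i j \<longleftrightarrow> 1 \<le> i \<and> i + 2 \<le> j \<and> j \<le> n \<and> \<not> (i = 1 \<and> j = n)"
proof
  assume H: "is_diag n i j"
  then have h: "1 \<le> i" "i < j" "j \<le> n" "(i+1) mod n \<noteq> j mod n" "(j+1) mod n \<noteq> i mod n"
    unfolding is_diag_def by blast+
  have im: "i mod n = i" using h(2,3) by (intro mod_less) linarith
  show "1 \<le> i \<and> i + 2 \<le> j \<and> j \<le> n \<and> \<not> (i = 1 \<and> j = n)"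
  proof (cases "j = n")
    case True
    have jm: "j mod n = 0" using True by simp
    have "i + 1 \<noteq> n"
    proof
      assume "i + 1 = n"
      then have "(i+1) mod n = 0" by simp
      then show False using h(4) jm by simp
    qed
    moreover have "(j+1) mod n = 1"
    proof -
      have "(j+1) mod n = (n + 1) mod n" using True by simp
      also have "... = 1 mod n" by (rule mod_add_self1)
      also have "... = 1" using n4 by (intro mod_less) linarith
      finally show ?thesis .
    qed
    then have "i \<noteq> 1" using h(5) im by simp
    ultimately show ?thesis using h(1,2,3) True by linarith
  next
    case False
    have jm: "j mod n = j" using False h(3) by (intro mod_less) linarith
    have i1m: "(i+1) mod n = i + 1" using False h(2,3) by (intro mod_less) linarith
    have "i + 1 \<noteq> j" using h(4) jm i1m by simp
    then show ?thesis using h(1,2,3) False by linarith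
  qed
next
  assume H: "1 \<le> i \<and> i + 2 \<le> j \<and> j \<le> n \<and> \<not> (i = 1 \<and> j = n)"
  then have h: "1 \<le> i" "i + 2 \<le> j" "j \<le> n" "\<not> (i = 1 \<and> j = n)" by blast+
  have im: "i mod n = i" using h(2,3) by (intro mod_less) linarith
  have i1m: "(i+1) mod n = i + 1" using h(2,3) by (intro mod_less) linarith
  show "is_diag n i j"
  proof (cases "j = n")
    case True
    have jm: "j mod n = 0" using True by simp
    have j1m: "(j+1) mod n = 1"
    proof -
      have "(j+1) mod n = (n + 1) mod n" using True by simp
      also have "... = 1 mod n" by (rule mod_add_self1)
      also have "... = 1" using n4 by (intro mod_less) linarith
      finally show ?thesis .
    qed
    have "i \<noteq> 1" using h(4) True by blast
    then show ?thesis unfolding is_diag_def im i1m jm j1m using h(1,2,3) by linarith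
  next
    case False
    have jm: "j mod n = j" using False h(3) by (intro mod_less) linarith
    show ?thesis
    proof (cases "j + 1 = n")
      case True
      then have j1m: "(j+1) mod n = 0" by simp
      show ?thesis unfolding is_diag_def im i1m jm j1m using h(1,2,3) by linarith
    next
      case False2: False
      have j1m: "(j+1) mod n = j + 1" using False False2 h(3) by (intro mod_less) linarith
      show ?thesis unfolding is_diag_def im i1m jm j1m using h(1,2,3) by linarith
    qed
  qed
qed

lemma o_in:
  assumes "1 \<le> i" "i < k" "k < j" "j \<le> n"
  shows "orient (pp n i) (pp n j) (pp n k) < 0"
  using conv3[OF assms] orient_swap[of "pp n i" "pp n j" "pp n k"] by simp

lemma o_out1:
  assumes "1 \<le> i" "i < j" "j < k" "k \<le> n"
  shows "orient (pp n i) (pp n j) (pp n k) > 0"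
  using conv3[OF assms] by simp

lemma o_out2:
  assumes "1 \<le> k" "k < i" "i < j" "j \<le> n"
  shows "orient (pp n i) (pp n j) (pp n k) > 0"
  using conv3[OF assms] orient_cyc[of "pp n k" "pp n i" "pp n j"] by simp

lemma sum_orient_zero:
  assumes "(\<Sum>k\<in>S. c k) = 0" "(\<Sum>k\<in>S. c k * fst (q k)) = 0" "(\<Sum>k\<in>S. c k * snd (q k)) = 0"
  shows "(\<Sum>k\<in>S. c k * orient P R (q k)) = 0"
proof -
  have e: "\<And>k. c k * orient P R (q k) = (fst R - fst P) * (c k * snd (q k)) - (snd R - snd P) * (c k * fst (q k))
      + ((snd R - snd P) * fst P - (fst R - fst P) * snd P) * c k"
    by (simp add: orient_def algebra_simps)
  have "(\<Sum>k\<in>S. c k * orient P R (q k)) = (fst R - fst P) * (\<Sum>k\<in>S. c k * snd (q k)) - (snd R - snd P) * (\<Sum>k\<in>S. c k * fst (q k))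
      + ((snd R - snd P) * fst P - (fst R - fst P) * snd P) * (\<Sum>k\<in>S. c k)"
    unfolding e by (simp add: sum.distrib sum_subtractf sum_distrib_left)
  then show ?thesis using assms by simp
qed

lemma sum_orient_mid:
  "(\<Sum>v\<in>S. w v * orient P (q v) R) = (snd R - snd P) * ((\<Sum>v\<in>S. w v * fst (q v)) - fst P * (\<Sum>v\<in>S. w v))
     - (fst R - fst P) * ((\<Sum>v\<in>S. w v * snd (q v)) - snd P * (\<Sum>v\<in>S. w v))"
proof -
  have e: "\<And>v. w v * orient P (q v) R = (snd R - snd P) * (w v * fst (q v)) - (snd R - snd P) * fst P * w v
     - (fst R - fst P) * (w v * snd (q v)) + (fst R - fst P) * snd P * w v"
    by (simp add: orient_def algebra_simps)
  show ?thesis unfolding e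
    by (simp add: sum.distrib sum_subtractf sum_distrib_left algebra_simps)
qed

lemma sum_split3:
  assumes "finite S" "a \<in> S" "b \<in> S" "c \<in> S" "a \<noteq> b" "a \<noteq> c" "b \<noteq> c"
  shows "sum f S = f a + f b + f c + sum f (S - {a, b, c})"
proof -
  have "sum f S = f a + sum f (S - {a})" using assms by (simp add: sum.remove)
  also have "sum f (S - {a}) = f b + sum f (S - {a} - {b})" using assms by (simp add: sum.remove)
  also have "sum f (S - {a} - {b}) = f c + sum f (S - {a} - {b} - {c})" using assms by (simp add: sum.remove)
  also have "S - {a} - {b} - {c} = S - {a, b, c}" by auto
  finally show ?thesis by (simp add: add.assoc)
qed

lemma alg_half:
  fixes a1 a2 b1 b2 h1 h2 X Y W B den :: real
  assumes "den = (b1-a1)*(h2-a2) - (b2-a2)*(h1-a1)" "den \<noteq> 0"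
    "W * den = (b2-a2)*X - (b1-a1)*Y"
    "B * den = (h2-a2)*X - (h1-a1)*Y"
  shows "B*(b1-a1) - W*(h1-a1) = X"
proof -
  have "den*(B*(b1-a1) - W*(h1-a1)) = (B*den)*(b1-a1) - (W*den)*(h1-a1)" by (simp add: algebra_simps)
  also have "... = ((h2-a2)*X - (h1-a1)*Y)*(b1-a1) - ((b2-a2)*X - (b1-a1)*Y)*(h1-a1)"
    by (simp only: assms(3,4))
  also have "... = X * ((b1-a1)*(h2-a2) - (b2-a2)*(h1-a1))" by (simp add: algebra_simps)
  also have "... = den * X" using assms(1) by simp
  finally show ?thesis using assms(2) by simp
qed

lemma alg_XQ:
  fixes a1 a2 b1 b2 h1 h2 S SX SY W B A den :: real
  assumes "den = (b1-a1)*(h2-a2) - (b2-a2)*(h1-a1)" "den \<noteq> 0"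
    "W = ((b2-a2)*(SX - a1*S) - (b1-a1)*(SY-a2*S))/den"
    "B = ((h2-a2)*(SX-a1*S) - (h1-a1)*(SY-a2*S))/den"
    "A = W - B + S"
  shows "A*a1 + B*b1 - W*h1 - SX = 0 \<and> A*a2 + B*b2 - W*h2 - SY = 0"
proof -
  have eW: "W * den = (b2-a2)*(SX - a1*S) - (b1-a1)*(SY-a2*S)" using assms(2,3) by simp
  have eB: "B * den = (h2-a2)*(SX-a1*S) - (h1-a1)*(SY-a2*S)" using assms(2,4) by simp
  have x: "B*(b1-a1) - W*(h1-a1) = SX - a1*S"
    by (rule alg_half[OF assms(1,2) eW eB])
  have d2: "-den = (b2-a2)*(h1-a1) - (b1-a1)*(h2-a2)" using assms(1) by (simp add: algebra_simps)
  have nd2: "-den \<noteq> 0" using assms(2) by simp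
  have eW2: "W * -den = (b1-a1)*(SY-a2*S) - (b2-a2)*(SX - a1*S)" using eW by (simp add: algebra_simps)
  have eB2: "B * -den = (h1-a1)*(SY-a2*S) - (h2-a2)*(SX-a1*S)" using eB by (simp add: algebra_simps)
  have y: "B*(b2-a2) - W*(h2-a2) = SY - a2*S"
    by (rule alg_half[OF d2 nd2 eW2 eB2])
  have "A*a1 + B*b1 - W*h1 - SX = B*(b1-a1) - W*(h1-a1) - (SX - a1*S)" unfolding assms(5) by (simp add: algebra_simps)
  moreover have "A*a2 + B*b2 - W*h2 - SY = B*(b2-a2) - W*(h2-a2) - (SY - a2*S)" unfolding assms(5) by (simp add: algebra_simps)
  ultimately show ?thesis using x y by simp
qed

lemma F1:
  assumes "1 \<le> i" "i < c - 1" "c < j" "j < n"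
  shows "orient (pp n i) (pp n c) (pp n j) < orient (pp n i) (pp n (c - 1)) (pp n j)"
proof -
  have ne: "i \<noteq> n" "c \<noteq> n" "c - 1 \<noteq> n" "j \<noteq> n" using assms by auto
  obtain m where m: "c = Suc (Suc m)" using assms by (metis Suc_diff_Suc diff_0_eq_0 diff_Suc_1 less_nat_zero_code not0_implies_Suc)
  define ti where "ti = tt i"
  define tc where "tc = tt c"
  define tc1 where "tc1 = tt (c - 1)"
  define tj where "tj = tt j"
  define q where "q = ((1/2::real)^m)"
  have e1: "orient (pp n i) (pp n c) (pp n j) = (tc - ti) * (tj - ti) * (tj - tc)"
    using ne by (simp add: pp_nN orient_par ti_def tc_def tj_def)
  have e2: "orient (pp n i) (pp n (c-1)) (pp n j) = (tc1 - ti) * (tj - ti) * (tj - tc1)"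
    using ne by (simp add: pp_nN orient_par ti_def tc1_def tj_def)
  have tc1e: "tc1 = - q / 2" unfolding tc1_def tt_def q_def m by simp
  have tce: "tc = - q / 4" unfolding tc_def tt_def q_def m by simp
  have tim: "ti \<le> tt m" unfolding ti_def using assms m by (intro tt_mono_le) simp
  have tme: "tt m = - q" unfolding tt_def q_def by simp
  have "tj < 0" unfolding tj_def by (rule tt_neg)
  have "0 < q" unfolding q_def by simp
  have key: "tc + tc1 - ti - tj > 0" using tc1e tce tim tme \<open>tj < 0\<close> \<open>0 < q\<close> by linarith
  have lt1: "tc1 < tc" unfolding tc1_def tc_def using assms by (intro tt_mono) simp
  have lt2: "ti < tj" unfolding ti_def tj_def using assms by (intro tt_mono) simp
  have dif: "(tc1 - ti) * (tj - tc1) - (tc - ti) * (tj - tc) = (tc - tc1) * (tc + tc1 - ti - tj)"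
    by (simp add: algebra_simps)
  have "(tc - tc1) * (tc + tc1 - ti - tj) > 0" using lt1 key by simp
  then have XY: "(tc - ti) * (tj - tc) < (tc1 - ti) * (tj - tc1)" using dif by linarith
  have P: "(tj - ti) * ((tc - ti) * (tj - tc)) < (tj - ti) * ((tc1 - ti) * (tj - tc1))"
    using XY lt2 by (intro mult_strict_left_mono) simp_all
  have eq1: "(tc - ti) * (tj - ti) * (tj - tc) = (tj - ti) * ((tc - ti) * (tj - tc))" by (simp add: algebra_simps)
  have eq2: "(tc1 - ti) * (tj - ti) * (tj - tc1) = (tj - ti) * ((tc1 - ti) * (tj - tc1))" by (simp add: algebra_simps)
  show ?thesis unfolding e1 e2 eq1 eq2 by (rule P)
qed

lemma F2:
  assumes "1 \<le> a" "a < c - 1" "c < n"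
  shows "orient (pp n a) (pp n (c - 1)) (pp n n) < orient (pp n a) (pp n c) (pp n n)"
proof -
  have ne: "a \<noteq> n" "c \<noteq> n" "c - 1 \<noteq> n" using assms by auto
  define x where "x = tt a"
  define y1 where "y1 = tt (c - 1)"
  define y2 where "y2 = tt c"
  have e1: "orient (pp n a) (pp n (c-1)) (pp n n) = (y1 - x) * (1 + x * y1)"
    using ne by (simp add: pp_nN pp_N orient_parN x_def y1_def)
  have e2: "orient (pp n a) (pp n c) (pp n n) = (y2 - x) * (1 + x * y2)"
    using ne by (simp add: pp_nN pp_N orient_parN x_def y2_def)
  have "y1 < y2" unfolding y1_def y2_def using assms by (intro tt_mono) simp
  have "x < 0" "y1 < 0" "y2 < 0" unfolding x_def y1_def y2_def by (auto intro: tt_neg)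
  have "- (1/2) \<le> x" unfolding x_def using assms by (intro tt_ge) simp
  have d: "(y2 - x) * (1 + x * y2) - (y1 - x) * (1 + x * y1) = (y2 - y1) * (1 + x * (y1 + y2) - x * x)"
    by (simp add: algebra_simps)
  have "x * (y1 + y2) > 0" using \<open>x < 0\<close> \<open>y1 < 0\<close> \<open>y2 < 0\<close> by (simp add: mult_neg_neg)
  moreover have "x * x \<le> 1/4"
  proof -
    have "(-x) * (-x) \<le> (1/2) * (1/2)" using \<open>- (1/2) \<le> x\<close> \<open>x < 0\<close>
      by (intro mult_mono) auto
    then show ?thesis by simp
  qed
  ultimately have "1 + x * (y1 + y2) - x * x > 0" by linarith
  then have "(y2 - y1) * (1 + x * (y1 + y2) - x * x) > 0" using \<open>y1 < y2\<close> by simp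
  then show ?thesis unfolding e1 e2 using d by linarith
qed




definition hh :: "nat \<Rightarrow> nat \<Rightarrow> nat" where "hh n b = (if b < n then n else 1)"
definition qO :: "nat \<Rightarrow> nat \<Rightarrow> nat \<Rightarrow> nat set" where "qO n a b = {1..n} - {a, b, hh n b}"
definition qO2 :: "nat \<Rightarrow> nat \<Rightarrow> nat \<Rightarrow> nat set" where "qO2 n a b = qO n a b - {b - 1}"
definition qS1 :: "nat \<Rightarrow> nat \<Rightarrow> nat \<Rightarrow> real" where
  "qS1 n a b = (\<Sum>v\<in>qO2 n a b. orient (pp n a) (pp n v) (pp n b))"
definition qS3 :: "nat \<Rightarrow> nat \<Rightarrow> nat \<Rightarrow> real" where
  "qS3 n a b = (\<Sum>v\<in>qO2 n a b. orient (pp n a) (pp n v) (pp n (hh n b)))"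
definition qM1 :: "nat \<Rightarrow> nat \<Rightarrow> nat \<Rightarrow> real" where
  "qM1 n a b = orient (pp n a) (pp n (b - 1)) (pp n b)"
definition qM3 :: "nat \<Rightarrow> nat \<Rightarrow> nat \<Rightarrow> real" where
  "qM3 n a b = orient (pp n a) (pp n b) (pp n (hh n b)) - orient (pp n a) (pp n (b - 1)) (pp n (hh n b))"
definition qK :: "nat \<Rightarrow> nat \<Rightarrow> nat \<Rightarrow> real" where
  "qK n a b = \<bar>qS1 n a b\<bar> + \<bar>qS3 n a b\<bar> + 1"
definition qL :: "nat \<Rightarrow> nat \<Rightarrow> nat \<Rightarrow> real" where
  "qL n a b = qK n a b / qM1 n a b + qK n a b / \<bar>qM3 n a b\<bar>"
definition qw :: "nat \<Rightarrow> nat \<Rightarrow> nat \<Rightarrow> nat \<Rightarrow> real" where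
  "qw n a b v = (if v = b - 1 then qL n a b else 1)"
definition qden :: "nat \<Rightarrow> nat \<Rightarrow> nat \<Rightarrow> real" where
  "qden n a b = orient (pp n a) (pp n b) (pp n (hh n b))"
definition qW :: "nat \<Rightarrow> nat \<Rightarrow> nat \<Rightarrow> real" where
  "qW n a b = (\<Sum>v\<in>qO n a b. qw n a b v * orient (pp n a) (pp n v) (pp n b)) / qden n a b"
definition qB :: "nat \<Rightarrow> nat \<Rightarrow> nat \<Rightarrow> real" where
  "qB n a b = (\<Sum>v\<in>qO n a b. qw n a b v * orient (pp n a) (pp n v) (pp n (hh n b))) / qden n a b"
definition qA :: "nat \<Rightarrow> nat \<Rightarrow> nat \<Rightarrow> real" where
  "qA n a b = qW n a b - qB n a b + (\<Sum>v\<in>qO n a b. qw n a b v)"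
definition xx :: "nat \<Rightarrow> nat \<Rightarrow> nat \<Rightarrow> nat \<Rightarrow> real" where
  "xx n a b v = (if v = a then qA n a b else if v = b then qB n a b
      else if v = hh n b then - qW n a b else - qw n a b v)"

context
  fixes n a b :: nat
  assumes n4: "4 \<le> n" and a1: "1 \<le> a" and ab: "a + 2 \<le> b" and bn: "b \<le> n"
    and nd: "\<not> (a = 1 \<and> b = n)"
begin

lemma h_facts: "1 \<le> hh n b" "hh n b \<le> n" "hh n b \<noteq> a" "hh n b \<noteq> b" "hh n b \<noteq> b - 1"
  "hh n b < a \<or> b < hh n b"
  using n4 a1 ab bn nd by (auto simp: hh_def)

lemma bm1: "a < b - 1" "1 \<le> b - 1" "b - 1 \<noteq> a" "b - 1 < b" "b - 1 \<noteq> b"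
  using a1 ab by auto

lemma finO: "finite (qO n a b)" by (simp add: qO_def)

lemma b1_in: "b - 1 \<in> qO n a b"
  using bm1 h_facts bn by (auto simp: qO_def)

lemma sumO: "(\<Sum>v\<in>qO n a b. qw n a b v * f v) = qL n a b * f (b - 1) + (\<Sum>v\<in>qO2 n a b. f v)"
proof -
  have "(\<Sum>v\<in>qO n a b. qw n a b v * f v) = qw n a b (b-1) * f (b-1) + (\<Sum>v\<in>qO n a b - {b-1}. qw n a b v * f v)"
    using sum.remove[OF finO b1_in] by simp
  also have "(\<Sum>v\<in>qO n a b - {b-1}. qw n a b v * f v) = (\<Sum>v\<in>qO2 n a b. f v)"
    unfolding qO2_def by (rule sum.cong) (auto simp: qw_def)
  finally show ?thesis by (simp add: qw_def)
qed

lemma den_pos: "qden n a b > 0"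
  using h_facts(6)
proof
  assume "hh n b < a"
  then show ?thesis unfolding qden_def using o_out2[of "hh n b" a b n] h_facts a1 ab bn by simp
next
  assume "b < hh n b"
  then show ?thesis unfolding qden_def using o_out1[of a b "hh n b" n] h_facts a1 ab bn by simp
qed

lemma M1_pos: "qM1 n a b > 0"
  unfolding qM1_def using conv3[of a "b - 1" b n] bm1 a1 bn by simp

lemma K_ge: "qK n a b \<ge> \<bar>qS1 n a b\<bar> + 1" "qK n a b \<ge> \<bar>qS3 n a b\<bar> + 1" "qK n a b > 0"
  unfolding qK_def by auto

lemma L_M1: "qL n a b * qM1 n a b \<ge> qK n a b"
proof -
  have "qL n a b * qM1 n a b = qK n a b + qK n a b / \<bar>qM3 n a b\<bar> * qM1 n a b"
    unfolding qL_def using M1_pos by (simp add: field_simps)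
  moreover have "qK n a b / \<bar>qM3 n a b\<bar> * qM1 n a b \<ge> 0" using K_ge M1_pos by simp
  ultimately show ?thesis by linarith
qed

lemma L_pos: "qL n a b > 0"
proof -
  have k: "qK n a b > 0" by (rule K_ge(3))
  have "qK n a b / qM1 n a b > 0" by (rule divide_pos_pos[OF k M1_pos])
  moreover have "qK n a b / \<bar>qM3 n a b\<bar> \<ge> 0" by (rule divide_nonneg_nonneg) (use k in auto)
  ultimately show ?thesis unfolding qL_def by linarith
qed

lemma W_pos: "qW n a b > 0"
proof -
  have e: "(\<Sum>v\<in>qO n a b. qw n a b v * orient (pp n a) (pp n v) (pp n b)) = qL n a b * qM1 n a b + qS1 n a b"
    unfolding sumO qM1_def qS1_def by (rule refl)
  have pos: "qL n a b * qM1 n a b + qS1 n a b > 0"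
    using L_M1 K_ge(1) abs_ge_minus_self[of "qS1 n a b"] by linarith
  show ?thesis unfolding qW_def e by (rule divide_pos_pos[OF pos den_pos])
qed

lemma B_le:
  assumes "b < n"
  shows "qB n a b \<le> qL n a b"
proof -
  have hn: "hh n b = n" using assms by (simp add: hh_def)
  have M3p: "qM3 n a b > 0" unfolding qM3_def hn using F2[of a b n] bm1 a1 assms by simp
  have "qL n a b * qM3 n a b = qK n a b / qM1 n a b * qM3 n a b + qK n a b"
    unfolding qL_def using M3p by (simp add: field_simps)
  moreover have "qK n a b / qM1 n a b * qM3 n a b \<ge> 0" using K_ge M1_pos M3p by simp
  ultimately have LM3: "qL n a b * qM3 n a b \<ge> qK n a b" by linarith
  have num: "(\<Sum>v\<in>qO n a b. qw n a b v * orient (pp n a) (pp n v) (pp n (hh n b)))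
      = qL n a b * (qden n a b - qM3 n a b) + qS3 n a b"
    unfolding sumO qM3_def qS3_def qden_def by simp
  have "qL n a b * (qden n a b - qM3 n a b) + qS3 n a b \<le> qL n a b * qden n a b"
    using LM3 K_ge by (simp add: algebra_simps)
  then show ?thesis unfolding qB_def num using den_pos by (simp add: pos_divide_le_eq)
qed

lemma w_pos: "qw n a b v > 0"
  using L_pos by (simp add: qw_def)

lemma xx_neg:
  assumes "v \<noteq> a" "v \<noteq> b"
  shows "xx n a b v < 0"
  using assms W_pos w_pos[of v] by (auto simp: xx_def)

lemma xx_sum: "(\<Sum>v=1..n. xx n a b v * f v) = qA n a b * f a + qB n a b * f b - qW n a b * f (hh n b)
    - (\<Sum>v\<in>qO n a b. qw n a b v * f v)"
proof -
  have dist: "a \<noteq> b" "a \<noteq> hh n b" "b \<noteq> hh n b" "b \<noteq> a" "hh n b \<noteq> a" "hh n b \<noteq> b"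
    using ab h_facts by auto
  have mem: "a \<in> {1..n}" "b \<in> {1..n}" "hh n b \<in> {1..n}" using a1 ab bn h_facts by auto
  have "(\<Sum>v=1..n. xx n a b v * f v) = xx n a b a * f a + xx n a b b * f b + xx n a b (hh n b) * f (hh n b)
      + (\<Sum>v\<in>{1..n} - {a, b, hh n b}. xx n a b v * f v)"
    by (rule sum_split3) (use dist mem in auto)
  also have "(\<Sum>v\<in>{1..n} - {a, b, hh n b}. xx n a b v * f v) = (\<Sum>v\<in>qO n a b. - (qw n a b v * f v))"
    unfolding qO_def by (rule sum.cong) (auto simp: xx_def)
  also have "... = - (\<Sum>v\<in>qO n a b. qw n a b v * f v)" by (rule sum_negf)
  finally show ?thesis using dist by (simp add: xx_def)
qed

lemma XQ: "in_XQ n (pp n) (xx n a b)"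
proof -
  define S where "S = (\<Sum>v\<in>qO n a b. qw n a b v)"
  define SX where "SX = (\<Sum>v\<in>qO n a b. qw n a b v * fst (pp n v))"
  define SY where "SY = (\<Sum>v\<in>qO n a b. qw n a b v * snd (pp n v))"
  define a1' where "a1' = fst (pp n a)"
  define a2' where "a2' = snd (pp n a)"
  define b1' where "b1' = fst (pp n b)"
  define b2' where "b2' = snd (pp n b)"
  define h1' where "h1' = fst (pp n (hh n b))"
  define h2' where "h2' = snd (pp n (hh n b))"
  have dd: "qden n a b = (b1'-a1')*(h2'-a2') - (b2'-a2')*(h1'-a1')"
    unfolding qden_def orient_def a1'_def a2'_def b1'_def b2'_def h1'_def h2'_def by simp
  have dn: "qden n a b \<noteq> 0" using den_pos by simp
  have W: "qW n a b = ((b2'-a2')*(SX - a1'*S) - (b1'-a1')*(SY-a2'*S))/qden n a b"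
    unfolding qW_def sum_orient_mid SX_def SY_def S_def a1'_def a2'_def b1'_def b2'_def by simp
  have B: "qB n a b = ((h2'-a2')*(SX-a1'*S) - (h1'-a1')*(SY-a2'*S))/qden n a b"
    unfolding qB_def sum_orient_mid SX_def SY_def S_def a1'_def a2'_def h1'_def h2'_def by simp
  have A: "qA n a b = qW n a b - qB n a b + S" unfolding qA_def S_def by simp
  have alg: "qA n a b*a1' + qB n a b*b1' - qW n a b*h1' - SX = 0 \<and> qA n a b*a2' + qB n a b*b2' - qW n a b*h2' - SY = 0"
    by (rule alg_XQ[OF dd dn W B A])
  have s0: "(\<Sum>v=1..n. xx n a b v) = 0"
    using xx_sum[of "\<lambda>_. 1"] A S_def by simp
  have s1: "(\<Sum>v=1..n. xx n a b v * fst (pp n v)) = 0"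
    using xx_sum[of "\<lambda>v. fst (pp n v)"] alg unfolding SX_def a1'_def b1'_def h1'_def by simp
  have s2: "(\<Sum>v=1..n. xx n a b v * snd (pp n v)) = 0"
    using xx_sum[of "\<lambda>v. snd (pp n v)"] alg unfolding SY_def a2'_def b2'_def h2'_def by simp
  show ?thesis unfolding in_XQ_def using s0 s1 s2 by simp
qed

end




context
  fixes n a b :: nat
  assumes n4: "4 \<le> n" and a1: "1 \<le> a" and ab: "a + 2 \<le> b" and bn: "b \<le> n"
    and nd: "\<not> (a = 1 \<and> b = n)"
begin

lemma pair_pos:
  assumes i1: "1 \<le> i" and ij: "i + 2 \<le> j" and jn: "j \<le> n" and ndd: "\<not> (i = 1 \<and> j = n)"
    and sw: "swaps n i j a b"
  shows "pairing n (pp n) i j (xx n a b) > 0"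
proof -
  define oo where "oo k = orient (pp n i) (pp n j) (pp n k)" for k
  have sgn_in: "oo k < 0" if "i < k" "k < j" for k
    unfolding oo_def using o_in[of i k j n] that i1 jn by simp
  have sgn_out: "oo k \<ge> 0" if "1 \<le> k" "k \<le> n" "k \<le> i \<or> j \<le> k" for k
  proof -
    have "k = i \<or> k = j \<or> k < i \<or> j < k" using that(3) by auto
    then consider "k = i" | "k = j" | "k < i" | "j < k" by blast
    then show ?thesis
    proof cases
      case 1 then show ?thesis unfolding oo_def by (simp add: orient_same1)
    next
      case 2 then show ?thesis unfolding oo_def by (simp add: orient_same2)
    next
      case 3 then show ?thesis unfolding oo_def using o_out2[of k i j n] that ij jn by simp
    next
      case 4 then show ?thesis unfolding oo_def using o_out1[of i j k n] that ij i1 by simp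
    qed
  qed
  have P: "pairing n (pp n) i j (xx n a b) = (\<Sum>k=1..n. xx n a b k * min (oo k) 0)"
    unfolding pairing_def psi_def oo_def by simp
  have sw': "\<not> crosses i j a b \<or> (a < i \<and> i < b \<and> b < j \<and> j < n \<and> b - i > 1)"
    using sw unfolding swaps_def by simp
  consider (C) "a < i" "i < b" "b < j" "j < n" "b - i > 1"
    | (F) "\<not> (i < a \<and> a < j)" "\<not> (i < b \<and> b < j)"
    | (N) "i \<le> a" "b \<le> j"
    using sw' ab unfolding crosses_def by linarith
  then show ?thesis
  proof cases
    case F
    have "0 < (\<Sum>k=1..n. xx n a b k * min (oo k) 0)"
    proof (rule sum_pos2)
      show "finite {1..n}" by simp
      show "i + 1 \<in> {1..n}" using ij jn by simp
      have "xx n a b (i+1) < 0" using F ij by (intro xx_neg[OF n4 a1 ab bn nd]) auto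
      moreover have "oo (i+1) < 0" using ij by (intro sgn_in) auto
      ultimately show "0 < xx n a b (i+1) * min (oo (i+1)) 0" by (simp add: mult_neg_neg)
    next
      fix k assume k: "k \<in> {1..n}"
      show "0 \<le> xx n a b k * min (oo k) 0"
      proof (cases "i < k \<and> k < j")
        case True
        then have "xx n a b k < 0" using F by (intro xx_neg[OF n4 a1 ab bn nd]) auto
        moreover have "oo k < 0" using True sgn_in by auto
        ultimately show ?thesis by (simp add: mult_neg_neg less_imp_le)
      next
        case False
        then have "oo k \<ge> 0" using k by (intro sgn_out) auto
        then show ?thesis by simp
      qed
    qed
    then show ?thesis using P by simp
  next
    case N
    have XQ': "in_XQ n (pp n) (xx n a b)" by (rule XQ[OF n4 a1 ab bn nd])
    have z: "(\<Sum>k=1..n. xx n a b k * oo k) = 0"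
      unfolding oo_def by (rule sum_orient_zero) (use XQ' in \<open>auto simp: in_XQ_def\<close>)
    have e: "xx n a b k * min (oo k) 0 = xx n a b k * oo k + (- xx n a b k * max (oo k) 0)" for k
      by (cases "oo k \<le> 0") (auto simp: algebra_simps)
    have "(\<Sum>k=1..n. xx n a b k * min (oo k) 0) = (\<Sum>k=1..n. xx n a b k * oo k) + (\<Sum>k=1..n. - xx n a b k * max (oo k) 0)"
      unfolding e by (rule sum.distrib)
    also have "... = (\<Sum>k=1..n. - xx n a b k * max (oo k) 0)" using z by simp
    also have "... > 0"
    proof (rule sum_pos2)
      show "finite {1..n}" by simp
      define k0 where "k0 = (if j < n then j + 1 else 1)"
      have k0: "k0 \<in> {1..n}" "k0 < i \<or> j < k0" using ndd i1 jn ij unfolding k0_def by auto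
      have "xx n a b k0 < 0" using N k0 ab by (intro xx_neg[OF n4 a1 ab bn nd]) auto
      moreover have "oo k0 > 0"
        using k0 unfolding oo_def using o_out1[of i j k0 n] o_out2[of k0 i j n] i1 ij jn by auto
      ultimately show "0 < - xx n a b k0 * max (oo k0) 0" by (simp add: mult_neg_pos)
      show "k0 \<in> {1..n}" using k0 by simp
    next
      fix k assume k: "k \<in> {1..n}"
      show "0 \<le> - xx n a b k * max (oo k) 0"
      proof (cases "k < i \<or> j < k")
        case True
        then have "xx n a b k < 0" using N ab by (intro xx_neg[OF n4 a1 ab bn nd]) auto
        then have "- xx n a b k \<ge> 0" by simp
        moreover have "max (oo k) 0 \<ge> 0" by simp
        ultimately show ?thesis by (rule mult_nonneg_nonneg)
      next
        case False
        then have "oo k \<le> 0"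
        proof (cases "k = i \<or> k = j")
          case True then show ?thesis unfolding oo_def by (auto simp: orient_same1 orient_same2)
        next
          case False2: False
          then show ?thesis using False sgn_in[of k] by auto
        qed
        then show ?thesis by simp
      qed
    qed
    finally show ?thesis using P by simp
  next
    case C
    define f where "f k = xx n a b k * min (oo k) 0" for k
    have mem: "b - 1 \<in> {1..n}" "b \<in> {1..n}" "b \<in> {1..n} - {b - 1}" using bm1[OF n4 a1 ab bn nd] bn by auto
    have split: "(\<Sum>k=1..n. f k) = f (b-1) + (f b + (\<Sum>k\<in>{1..n} - {b-1} - {b}. f k))"
      using sum.remove[of "{1..n}" "b-1" f] sum.remove[of "{1..n} - {b-1}" b f] mem by simp
    have rest: "(\<Sum>k\<in>{1..n} - {b-1} - {b}. f k) \<ge> 0"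
    proof (rule sum_nonneg)
      fix k assume k: "k \<in> {1..n} - {b-1} - {b}"
      show "0 \<le> f k"
      proof (cases "i < k \<and> k < j")
        case True
        then have "xx n a b k < 0" using C k by (intro xx_neg[OF n4 a1 ab bn nd]) auto
        moreover have "oo k < 0" using True sgn_in by auto
        ultimately show ?thesis unfolding f_def by (simp add: mult_neg_neg less_imp_le)
      next
        case False
        then have "oo k \<ge> 0" using k by (intro sgn_out) auto
        then show ?thesis unfolding f_def by simp
      qed
    qed
    define D1 where "D1 = orient (pp n i) (pp n (b-1)) (pp n j)"
    define D2 where "D2 = orient (pp n i) (pp n b) (pp n j)"
    have D2p: "D2 > 0" unfolding D2_def using conv3[of i b j n] C i1 jn by simp
    have D12: "D2 < D1" unfolding D1_def D2_def using F1[of i b j n] C i1 by simp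
    have hn: "hh n b = n" using C by (simp add: hh_def)
    have xb1: "xx n a b (b-1) = - qL n a b"
    proof -
      have "b - 1 \<noteq> n" "b - 1 \<noteq> a" "b - 1 \<noteq> b" using C bm1[OF n4 a1 ab bn nd] by linarith+
      then show ?thesis using hn by (simp add: xx_def qw_def)
    qed
    have xb: "xx n a b b = qB n a b" using ab by (simp add: xx_def)
    have ob1: "oo (b-1) = - D1" unfolding oo_def D1_def by (rule orient_swap)
    have ob: "oo b = - D2" unfolding oo_def D2_def by (rule orient_swap)
    have D1p: "D1 > 0" using D12 D2p by simp
    have fsum: "f (b-1) + f b = qL n a b * D1 - qB n a b * D2"
      unfolding f_def xb1 xb ob1 ob using D1p D2p by simp
    have L: "qL n a b > 0" by (rule L_pos[OF n4 a1 ab bn nd])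
    have Bl: "qB n a b \<le> qL n a b" using B_le[OF n4 a1 ab bn nd] C by simp
    have "qL n a b * D2 < qL n a b * D1" using L D12 by simp
    moreover have "qB n a b * D2 \<le> qL n a b * D2" using Bl D2p by (simp add: mult_right_mono)
    ultimately have "f (b-1) + f b > 0" using fsum by linarith
    then have "(\<Sum>k=1..n. f k) > 0" using split rest by linarith
    then show ?thesis using P unfolding f_def by simp
  qed
qed

end

theorem lemma3p2:
  fixes n :: nat
  assumes "n \<ge> 4"
  shows "\<exists>p :: nat \<Rightarrow> real \<times> real. convex_ngon n p \<and>
           (\<exists>x :: nat \<Rightarrow> nat \<Rightarrow> nat \<Rightarrow> real.
              (\<forall>i j. is_diag n i j \<longrightarrow> in_XQ n p (x i j)) \<and>
              (\<forall>i j i' j'. is_diag n i j \<longrightarrow> is_diag n i' j' \<longrightarrow> swaps n i j i' j' \<longrightarrow>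
                  pairing n p i j (x i' j') > 0))"
proof -
  have conv: "convex_ngon n (pp n)" unfolding convex_ngon_def using conv3 by blast
  have X: "\<forall>i j. is_diag n i j \<longrightarrow> in_XQ n (pp n) (xx n i j)"
  proof (intro allI impI)
    fix i j assume "is_diag n i j"
    then have d: "1 \<le> i" "i + 2 \<le> j" "j \<le> n" "\<not> (i = 1 \<and> j = n)" using diag_char[OF assms] by auto
    show "in_XQ n (pp n) (xx n i j)" by (rule XQ[OF assms d])
  qed
  have Pp: "\<forall>i j i' j'. is_diag n i j \<longrightarrow> is_diag n i' j' \<longrightarrow> swaps n i j i' j' \<longrightarrow>
                  pairing n (pp n) i j (xx n i' j') > 0"
  proof (intro allI impI)
    fix i j i' j' assume h1: "is_diag n i j" and h2: "is_diag n i' j'" and sw: "swaps n i j i' j'"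
    have d: "1 \<le> i" "i + 2 \<le> j" "j \<le> n" "\<not> (i = 1 \<and> j = n)" using h1 diag_char[OF assms] by auto
    have d': "1 \<le> i'" "i' + 2 \<le> j'" "j' \<le> n" "\<not> (i' = 1 \<and> j' = n)" using h2 diag_char[OF assms] by auto
    show "pairing n (pp n) i j (xx n i' j') > 0" by (rule pair_pos[OF assms d' d sw])
  qed
  show ?thesis using conv X Pp by blast
qed


end
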